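(* Let $n\ge 2$ be an integer and let $(x_0,y_0),\dots,(x_n,y_n)\in\mathbb{R}^2$ with $a:=x_0<x_1<\dots<x_n=:b$. For each $k\in\{1,\dots,n\}$ fix $d_k\in[0,1)$ and put \[ a_k=\frac{x_k-x_{k-1}}{x_n-x_0},\quad b_k=\frac{x_nx_{k-1}-x_0x_k}{x_n-x_0},\quad c_k=\frac{y_k-y_{k-1}}{x_n-x_0}-d_k\frac{y_n-y_0}{x_n-x_0},\quad e_k=\frac{x_ny_{k-1}-x_0y_k}{x_n-x_0}-d_k\frac{x_ny_0-x_0y_n}{x_n-x_0}, \] and $f_k(x,y)=(a_kx+b_k,\;c_kx+d_ky+e_k)$. Let $\theta=1$ if $c_1=\dots=c_n=0$ and $\theta=\dfrac{1-\max_k a_k}{2\max_k|c_k|}$ otherwise. Let $f:[a,b]\to\mathbb{R}$ be the affine fractal interpolation function associated with these data and $G_f=\{(x,f(x)):x\in[a,b]\}$. For $k\in\{1,\dots,n\}$ set \[ u_k=\frac{b_k}{1-a_k},\qquad v_k=\frac{b_kc_k}{(1-a_k)(1-d_k)}+\frac{e_k}{1-d_k},\qquad s_k=\max\{a_k+\theta|c_k|,\,d_k\}, \] and $M=\max_{i,j\in\{1,\dots,n\}}\left(|u_i-u_j|+\theta|v_i-v_j|\right)$. Let $\sigma$ be a permutation of $\{1,\dots,n\}$ with $s_{\sigma(1)}\le\dots\le s_{\sigma(n)}$, and let $D=1-s_{\sigma(n-1)}s_{\sigma(n)}$. Define \[ A=\min\left\{\min_{1\le j\le n-1}\left(v_{\sigma(j)}-\frac{Ms_{\sigma(j)}(1+s_{\sigma(n)})}{\theta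 D}\right),\ v_{\sigma(n)}-\frac{Ms_{\sigma(n)}(1+s_{\sigma(n-1)})}{\theta D}\right\}, \] \[ B=\max\left\{\max_{1\le j\le n-1}\left(v_{\sigma(j)}+\frac{Ms_{\sigma(j)}(1+s_{\sigma(n)})}{\theta D}\right),\ v_{\sigma(n)}+\frac{Ms_{\sigma(n)}(1+s_{\sigma(n-1)})}{\theta D}\right\}. \] Then $G_f\subseteq[a,b]\times[A,B]$.
   Context: The maps $f_k$ are contractions for the metric $\rho((u_1,v_1),(u_2,v_2))=|u_1-u_2|+\theta|v_1-v_2|$ on $\mathbb{R}^2$, and the attractor of the iterated function system $\{f_1,\dots,f_n\}$ is the unique nonempty compact set $K\subseteq\mathbb{R}^2$ with $K=\bigcup_{k=1}^n f_k(K)$. The affine fractal interpolation function is the continuous function $f:[a,b]\to\mathbb{R}$ with $f(x_k)=y_k$ for all $k\in\{0,\dots,n\}$ whose graph equals this attractor. *)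

theory Defs
  imports "HOL-Analysis.Analysis" "HOL-Combinatorics.Permutations"
begin

definition fif_a :: "(nat \<Rightarrow> real) \<Rightarrow> nat \<Rightarrow> nat \<Rightarrow> real" where
  "fif_a x n k = (x k - x (k - 1)) / (x n - x 0)"

definition fif_b :: "(nat \<Rightarrow> real) \<Rightarrow> nat \<Rightarrow> nat \<Rightarrow> real" where
  "fif_b x n k = (x n * x (k - 1) - x 0 * x k) / (x n - x 0)"

definition fif_c :: "(nat \<Rightarrow> real) \<Rightarrow> (nat \<Rightarrow> real) \<Rightarrow> (nat \<Rightarrow> real) \<Rightarrow> nat \<Rightarrow> nat \<Rightarrow> real" where
  "fif_c x y d n k = (y k - y (k - 1)) / (x n - x 0) - d k * (y n - y 0) / (x n - x 0)"

definition fif_e :: "(nat \<Rightarrow> real) \<Rightarrow> (nat \<Rightarrow> real) \<Rightarrow> (nat \<Rightarrow> real) \<Rightarrow> nat \<Rightarrow> nat \<Rightarrow> real" where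
  "fif_e x y d n k = (x n * y (k - 1) - x 0 * y k) / (x n - x 0)
                     - d k * (x n * y 0 - x 0 * y n) / (x n - x 0)"

definition fif_map :: "(nat \<Rightarrow> real) \<Rightarrow> (nat \<Rightarrow> real) \<Rightarrow> (nat \<Rightarrow> real) \<Rightarrow> nat \<Rightarrow> nat
    \<Rightarrow> real \<times> real \<Rightarrow> real \<times> real" where
  "fif_map x y d n k = (\<lambda>(u, v). (fif_a x n k * u + fif_b x n k,
                                  fif_c x y d n k * u + d k * v + fif_e x y d n k))"

definition fif_theta :: "(nat \<Rightarrow> real) \<Rightarrow> (nat \<Rightarrow> real) \<Rightarrow> (nat \<Rightarrow> real) \<Rightarrow> nat \<Rightarrow> real" where
  "fif_theta x y d n =
     (if (\<forall>k\<in>{1..n}. fif_c x y d n k = 0) then 1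
      else (1 - Max ((\<lambda>k. fif_a x n k) ` {1..n})) / (2 * Max ((\<lambda>k. \<bar>fif_c x y d n k\<bar>) ` {1..n})))"

text \<open>Attractor of the IFS {F 1, ..., F n}: the unique nonempty compact set K with
  K = F 1 (K) \<union> ... \<union> F n (K) (uniqueness holds since the maps are contractions).\<close>
definition is_ifs_attractor :: "nat \<Rightarrow> (nat \<Rightarrow> real \<times> real \<Rightarrow> real \<times> real) \<Rightarrow> (real \<times> real) set \<Rightarrow> bool" where
  "is_ifs_attractor n F K \<longleftrightarrow> K \<noteq> {} \<and> compact K \<and> K = (\<Union>k\<in>{1..n}. F k ` K)"

definition is_affine_fif :: "nat \<Rightarrow> (nat \<Rightarrow> real) \<Rightarrow> (nat \<Rightarrow> real) \<Rightarrow> (nat \<Rightarrow> real)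
    \<Rightarrow> (real \<Rightarrow> real) \<Rightarrow> bool" where
  "is_affine_fif n x y d f \<longleftrightarrow>
     continuous_on {x 0..x n} f \<and> (\<forall>k\<le>n. f (x k) = y k) \<and>
     is_ifs_attractor n (fif_map x y d n) {(t, f t) | t. t \<in> {x 0..x n}}"

end

theory Submission
  imports Defs
begin

lemma vhelp: fixes al be ga de ep :: real
  shows "be*ga/((1-al)*(1-de)) + ep/(1-de) = (ga*(be/(1-al)) + ep)/(1-de)"
  by (simp add: add_divide_distrib mult.commute)

lemma abstract_bound:
  fixes K :: "(real\<times>real) set" and F :: "nat \<Rightarrow> real\<times>real \<Rightarrow> real\<times>real"
    and P :: "nat \<Rightarrow> real\<times>real" and \<rho> :: "real\<times>real \<Rightarrow> real\<times>real \<Rightarrow> real"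
    and s :: "nat \<Rightarrow> real" and \<sigma> :: "nat \<Rightarrow> nat" and M :: real
  assumes Kne: "K \<noteq> {}" and KF: "K = (\<Union>k\<in>{1..n}. F k ` K)" and n2: "n \<ge> 2"
    and perm: "\<sigma> permutes {1..n}"
    and sorted: "\<And>i j. 1 \<le> i \<Longrightarrow> i \<le> j \<Longrightarrow> j \<le> n \<Longrightarrow> s (\<sigma> i) \<le> s (\<sigma> j)"
    and s01: "\<And>k. k \<in> {1..n} \<Longrightarrow> 0 \<le> s k \<and> s k < 1"
    and tri: "\<And>p q r. \<rho> p r \<le> \<rho> p q + \<rho> q r"
    and rnn: "\<And>p q. 0 \<le> \<rho> p q"
    and contr: "\<And>k p q. k \<in> {1..n} \<Longrightarrow> \<rho> (F k p) (F k q) \<le> s k * \<rho> p q"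
    and fixp: "\<And>k. k \<in> {1..n} \<Longrightarrow> F k (P k) = P k"
    and Mb: "\<And>i j. i \<in> {1..n} \<Longrightarrow> j \<in> {1..n} \<Longrightarrow> \<rho> (P j) (P i) \<le> M"
    and bdd: "\<And>k. k \<in> {1..n} \<Longrightarrow> bdd_above ((\<lambda>q. \<rho> q (P k)) ` K)"
  shows "\<And>k q. k \<in> {1..n} \<Longrightarrow> q \<in> K \<Longrightarrow> \<rho> q (P k) \<le>
     (if k = \<sigma> n then M * (1 + s (\<sigma> (n - 1))) / (1 - s (\<sigma> (n - 1)) * s (\<sigma> n))
      else M * (1 + s (\<sigma> n)) / (1 - s (\<sigma> (n - 1)) * s (\<sigma> n)))"
proof -
  define S where "S = s (\<sigma> n)"
  define T where "T = s (\<sigma> (n - 1))"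
  define R where "R k = (SUP q\<in>K. \<rho> q (P k))" for k
  have R_ge: "\<rho> q (P k) \<le> R k" if "k \<in> {1..n}" "q \<in> K" for q k
    unfolding R_def using that bdd by (intro cSUP_upper) auto
  have R_le: "R k \<le> z" if "\<And>q. q \<in> K \<Longrightarrow> \<rho> q (P k) \<le> z" for k z
    unfolding R_def using that Kne by (intro cSUP_least) auto
  have R_nn: "0 \<le> R k" if "k \<in> {1..n}" for k
  proof -
    obtain q where "q \<in> K" using Kne by auto
    then show ?thesis using R_ge[OF that \<open>q \<in> K\<close>] rnn[of q "P k"] by linarith
  qed
  have M0: "0 \<le> M" using Mb[of 1 1] rnn[of "P 1" "P 1"] n2 by auto
  have step: "\<exists>j\<in>{1..n}. \<rho> q (P k) \<le> s j * R j + (if j = k then 0 else M)"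
    if k: "k \<in> {1..n}" and q: "q \<in> K" for k q
  proof -
    obtain j q' where j: "j \<in> {1..n}" and q': "q' \<in> K" and qe: "q = F j q'"
      using q KF by blast
    have 1: "\<rho> q (P j) \<le> s j * R j"
    proof -
      have "\<rho> q (P j) = \<rho> (F j q') (F j (P j))" using qe fixp[OF j] by simp
      also have "\<dots> \<le> s j * \<rho> q' (P j)" by (rule contr[OF j])
      also have "\<dots> \<le> s j * R j" using s01[OF j] R_ge[OF j q'] by (intro mult_left_mono) auto
      finally show ?thesis .
    qed
    show ?thesis
    proof (cases "j = k")
      case True then show ?thesis using 1 j by auto
    next
      case False
      have "\<rho> q (P k) \<le> \<rho> q (P j) + \<rho> (P j) (P k)" by (rule tri)
      also have "\<dots> \<le> s j * R j + M" using 1 Mb[OF k j] by linarith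
      finally show ?thesis using False j by auto
    qed
  qed
  have sig_in: "\<sigma> i \<in> {1..n}" if "i \<in> {1..n}" for i
    using permutes_in_image[OF perm] that by auto
  have sig_inj: "\<sigma> i = \<sigma> j \<Longrightarrow> i = j" for i j
    using permutes_inj[OF perm] unfolding inj_def by blast
  have sT: "s j \<le> T" if "j \<in> {1..n}" "j \<noteq> \<sigma> n" for j
  proof -
    have "j \<in> \<sigma> ` {1..n}" using permutes_image[OF perm] that(1) by simp
    then obtain i where i: "i \<in> {1..n}" "j = \<sigma> i" by auto
    have "i \<noteq> n" using i that(2) by auto
    then show ?thesis unfolding T_def using i sorted[of i "n - 1"] by auto
  qed
  have TS: "T \<le> S" unfolding T_def S_def using sorted[of "n - 1" n] n2 by auto
  have S01: "0 \<le> S" "S < 1" unfolding S_def using s01 sig_in n2 by auto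
  have T0: "0 \<le> T" unfolding T_def using s01 sig_in n2 by auto
  define J where "J = {1..n} - {\<sigma> n}"
  have Jsub: "J \<subseteq> {1..n}" unfolding J_def by auto
  have Jfin: "finite J" unfolding J_def by auto
  have sn1: "\<sigma> (n - 1) \<in> J" unfolding J_def using sig_in[of "n - 1"] sig_inj[of "n - 1" n] n2 by auto
  have Jne: "J \<noteq> {}" using sn1 by auto
  define X where "X = Max (R ` J)"
  have RX: "R k \<le> X" if "k \<in> J" for k unfolding X_def using Jfin that by auto
  have signin: "\<sigma> n \<in> {1..n}" using sig_in n2 by auto
  define R' where "R' = R (\<sigma> n)"
  have R'0: "0 \<le> R'" unfolding R'_def using R_nn signin by auto
  have X0: "0 \<le> X" using RX[OF sn1] R_nn[of "\<sigma> (n - 1)"] Jsub sn1 by auto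
  have jb: "s j * R j \<le> T * X" if "j \<in> J" for j
    using that sT[of j] RX[of j] R_nn[of j] s01[of j] Jsub T0 unfolding J_def
    by (intro mult_mono) auto
  have R'b: "R' \<le> max (S * R') (T * X + M)"
    unfolding R'_def
  proof (rule R_le)
    fix q assume q: "q \<in> K"
    obtain j where j: "j \<in> {1..n}" and h: "\<rho> q (P (\<sigma> n)) \<le> s j * R j + (if j = \<sigma> n then 0 else M)"
      using step[OF signin q] by blast
    show "\<rho> q (P (\<sigma> n)) \<le> max (S * R (\<sigma> n)) (T * X + M)"
    proof (cases "j = \<sigma> n")
      case True then show ?thesis using h unfolding S_def by auto
    next
      case False then have "j \<in> J" using j unfolding J_def by auto
      then show ?thesis using h jb[of j] False by auto
    qed
  qed
  have R'b2: "R' \<le> T * X + M"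
  proof (cases "R' \<le> S * R'")
    case True
    then have "R' * (1 - S) \<le> 0" by (simp add: algebra_simps)
    then have "R' \<le> 0" using S01 by (simp add: mult_le_0_iff)
    moreover have "0 \<le> T * X" using T0 X0 by simp
    ultimately show ?thesis using M0 by linarith
  next
    case False then show ?thesis using R'b by auto
  qed
  have Xb: "X \<le> max (T * X + M) (S * R' + M)"
  proof -
    have "X \<in> R ` J" unfolding X_def using Jfin Jne by (intro Max_in) auto
    then obtain k where k: "k \<in> J" "X = R k" by auto
    have kk: "k \<in> {1..n}" using k Jsub by auto
    have "R k \<le> max (T * X + M) (S * R' + M)"
    proof (rule R_le)
      fix q assume q: "q \<in> K"
      obtain j where j: "j \<in> {1..n}" and h: "\<rho> q (P k) \<le> s j * R j + (if j = k then 0 else M)"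
        using step[OF kk q] by blast
      show "\<rho> q (P k) \<le> max (T * X + M) (S * R' + M)"
      proof (cases "j = \<sigma> n")
        case True then show ?thesis using h k unfolding S_def R'_def J_def by auto
      next
        case False then have "j \<in> J" using j unfolding J_def by auto
        then show ?thesis using h jb[of j] M0 by (auto split: if_splits)
      qed
    qed
    then show ?thesis using k by simp
  qed
  have "T * S \<le> 1 * S" using TS S01 by (intro mult_right_mono) auto
  then have D0: "0 < 1 - T * S" using S01 by linarith
  have XB: "X \<le> M * (1 + S) / (1 - T * S)"
  proof -
    have "S * R' \<le> S * (T * X + M)" using R'b2 S01 by (intro mult_left_mono) auto
    then have c: "X \<le> T * X + M \<or> X \<le> S * (T * X + M) + M"
      using Xb by linarith
    have "X * (1 - T * S) \<le> M * (1 + S)"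
    proof (cases "X \<le> T * X + M")
      case True
      then have h: "X * (1 - T) \<le> M" by (simp add: algebra_simps)
      have "X * (1 - T * S) \<le> X * (1 - T) * (1 + S)"
      proof -
        have "X * (1 - T) * (1 + S) - X * (1 - T * S) = X * (S - T)" by (simp add: algebra_simps)
        moreover have "0 \<le> X * (S - T)" using X0 TS by simp
        ultimately show ?thesis by linarith
      qed
      also have "\<dots> \<le> M * (1 + S)" using h S01 by (intro mult_right_mono) auto
      finally show ?thesis .
    next
      case False
      then have "X \<le> S * (T * X + M) + M" using c by auto
      then show ?thesis by (simp add: algebra_simps)
    qed
    then show ?thesis using D0 by (simp add: pos_le_divide_eq)
  qed
  have R'B: "R' \<le> M * (1 + T) / (1 - T * S)"
  proof -
    have "T * X \<le> T * (M * (1 + S) / (1 - T * S))" using XB T0 by (intro mult_left_mono)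
    then have "R' \<le> T * (M * (1 + S) / (1 - T * S)) + M" using R'b2 by linarith
    also have "\<dots> = M * (1 + T) / (1 - T * S)" using D0 by (simp add: field_simps)
    finally show ?thesis .
  qed
  fix k q assume k: "k \<in> {1..n}" and q: "q \<in> K"
  show "\<rho> q (P k) \<le>
     (if k = \<sigma> n then M * (1 + s (\<sigma> (n - 1))) / (1 - s (\<sigma> (n - 1)) * s (\<sigma> n))
      else M * (1 + s (\<sigma> n)) / (1 - s (\<sigma> (n - 1)) * s (\<sigma> n)))"
  proof (cases "k = \<sigma> n")
    case True
    then show ?thesis using R_ge[OF k q] R'B unfolding R'_def T_def S_def by auto
  next
    case False
    then have "k \<in> J" using k unfolding J_def by auto
    then have "\<rho> q (P k) \<le> M * (1 + S) / (1 - T * S)" using R_ge[OF k q] RX XB by force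
    then show ?thesis using False unfolding T_def S_def by simp
  qed
qed


theorem corollary3p1:
  fixes n :: nat and x y d :: "nat \<Rightarrow> real" and f :: "real \<Rightarrow> real"
    and \<sigma> :: "nat \<Rightarrow> nat"
  assumes n2: "n \<ge> 2"
    and xinc: "\<And>k. k < n \<Longrightarrow> x k < x (Suc k)"
    and drange: "\<And>k. k \<in> {1..n} \<Longrightarrow> 0 \<le> d k \<and> d k < 1"
    and fif: "is_affine_fif n x y d f"
    and perm: "\<sigma> permutes {1..n}"
    and sorted: "\<And>i j. 1 \<le> i \<Longrightarrow> i \<le> j \<Longrightarrow> j \<le> n \<Longrightarrow>
        max (fif_a x n (\<sigma> i) + fif_theta x y d n * \<bar>fif_c x y d n (\<sigma> i)\<bar>) (d (\<sigma> i))
        \<le> max (fif_a x n (\<sigma> j) + fif_theta x y d n * \<bar>fif_c x y d n (\<sigma> j)\<bar>) (d (\<sigma> j))"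
  shows
    "let a = x 0; b = x n; \<theta> = fif_theta x y d n;
         u = (\<lambda>k. fif_b x n k / (1 - fif_a x n k));
         v = (\<lambda>k. fif_b x n k * fif_c x y d n k / ((1 - fif_a x n k) * (1 - d k))
                  + fif_e x y d n k / (1 - d k));
         s = (\<lambda>k. max (fif_a x n k + \<theta> * \<bar>fif_c x y d n k\<bar>) (d k));
         M = Max ((\<lambda>(i, j). \<bar>u i - u j\<bar> + \<theta> * \<bar>v i - v j\<bar>) ` ({1..n} \<times> {1..n}));
         D = 1 - s (\<sigma> (n - 1)) * s (\<sigma> n);
         A = min (Min ((\<lambda>j. v (\<sigma> j) - M * s (\<sigma> j) * (1 + s (\<sigma> n)) / (\<theta> * D)) ` {1..n - 1}))
                 (v (\<sigma> n) - M * s (\<sigma> n) * (1 + s (\<sigma> (n - 1))) / (\<theta> * D));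
         B = max (Max ((\<lambda>j. v (\<sigma> j) + M * s (\<sigma> j) * (1 + s (\<sigma> n)) / (\<theta> * D)) ` {1..n - 1}))
                 (v (\<sigma> n) + M * s (\<sigma> n) * (1 + s (\<sigma> (n - 1))) / (\<theta> * D))
     in {(t, f t) | t. t \<in> {a..b}} \<subseteq> {a..b} \<times> {A..B}"
proof -
  define \<theta> where "\<theta> = fif_theta x y d n"
  define u where "u = (\<lambda>k. fif_b x n k / (1 - fif_a x n k))"
  define v where "v = (\<lambda>k. fif_b x n k * fif_c x y d n k / ((1 - fif_a x n k) * (1 - d k))
                  + fif_e x y d n k / (1 - d k))"
  define s where "s = (\<lambda>k. max (fif_a x n k + \<theta> * \<bar>fif_c x y d n k\<bar>) (d k))"
  define M where "M = Max ((\<lambda>(i, j). \<bar>u i - u j\<bar> + \<theta> * \<bar>v i - v j\<bar>) ` ({1..n} \<times> {1..n}))"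
  define D where "D = 1 - s (\<sigma> (n - 1)) * s (\<sigma> n)"
  define A where "A = min (Min ((\<lambda>j. v (\<sigma> j) - M * s (\<sigma> j) * (1 + s (\<sigma> n)) / (\<theta> * D)) ` {1..n - 1}))
                 (v (\<sigma> n) - M * s (\<sigma> n) * (1 + s (\<sigma> (n - 1))) / (\<theta> * D))"
  define B where "B = max (Max ((\<lambda>j. v (\<sigma> j) + M * s (\<sigma> j) * (1 + s (\<sigma> n)) / (\<theta> * D)) ` {1..n - 1}))
                 (v (\<sigma> n) + M * s (\<sigma> n) * (1 + s (\<sigma> (n - 1))) / (\<theta> * D))"
  define aa where "aa = fif_a x n"
  define bb where "bb = fif_b x n"
  define cc where "cc = fif_c x y d n"
  define ee where "ee = fif_e x y d n"
  define K where "K = {(t, f t) | t. t \<in> {x 0..x n}}"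
  define F where "F = fif_map x y d n"
  have K: "K \<noteq> {}" "compact K" "K = (\<Union>k\<in>{1..n}. F k ` K)"
    using fif unfolding is_affine_fif_def is_ifs_attractor_def K_def F_def by auto
  have xmono: "x i < x j" if "i < j" "j \<le> n" for i j
    using that
  proof (induction j)
    case 0 then show ?case by simp
  next
    case (Suc j)
    have "x j < x (Suc j)" using xinc Suc.prems by auto
    then show ?case using Suc by (cases "i = j") auto
  qed
  have L: "0 < x n - x 0" using xmono[of 0 n] n2 by auto
  have a01: "0 < aa k \<and> aa k < 1" if k: "k \<in> {1..n}" for k
  proof -
    have 1: "x (k - 1) < x k" using xmono[of "k - 1" k] k by auto
    have 2: "x k - x (k - 1) < x n - x 0"
    proof (cases "k = 1")
      case True
      then show ?thesis using xmono[of 1 n] n2 by auto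
    next
      case False
      then have "x 0 < x (k - 1)" using xmono[of 0 "k - 1"] k by auto
      moreover have "x k \<le> x n" using xmono[of k n] k by (cases "k = n") auto
      ultimately show ?thesis by linarith
    qed
    show ?thesis unfolding aa_def fif_a_def using 1 2 L by (auto simp: divide_simps)
  qed
  have d01: "0 \<le> d k \<and> d k < 1" if "k \<in> {1..n}" for k using drange that by auto
  have fin: "finite {1..n}" by simp
  have ne: "{1..n} \<noteq> {}" using n2 by auto
  have th: "0 < \<theta> \<and> (\<forall>k\<in>{1..n}. aa k + \<theta> * \<bar>cc k\<bar> < 1)"
  proof (cases "\<forall>k\<in>{1..n}. cc k = 0")
    case True
    then have "\<theta> = 1" unfolding \<theta>_def fif_theta_def cc_def by simp
    then show ?thesis using True a01 by auto
  next
    case False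
    define MA where "MA = Max (aa ` {1..n})"
    define MC where "MC = Max ((\<lambda>k. \<bar>cc k\<bar>) ` {1..n})"
    have nc: "\<not> (\<forall>k\<in>{1..n}. fif_c x y d n k = 0)" using False unfolding cc_def .
    have thd: "\<theta> = (1 - MA) / (2 * MC)"
      unfolding \<theta>_def fif_theta_def MA_def MC_def aa_def cc_def by (simp only: nc if_False)
    have "MA \<in> aa ` {1..n}" unfolding MA_def using fin ne by (intro Max_in) auto
    then have MA1: "MA < 1" using a01 by auto
    have aMA: "aa k \<le> MA" if "k \<in> {1..n}" for k unfolding MA_def using fin that by auto
    have cMC: "\<bar>cc k\<bar> \<le> MC" if "k \<in> {1..n}" for k unfolding MC_def using fin that by auto
    obtain k0 where k0: "k0 \<in> {1..n}" "cc k0 \<noteq> 0" using False by auto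
    have MC0: "0 < MC" using cMC[OF k0(1)] k0(2) by linarith
    have tpos: "0 < \<theta>" unfolding thd using MA1 MC0 by simp
    have "aa k + \<theta> * \<bar>cc k\<bar> < 1" if k: "k \<in> {1..n}" for k
    proof -
      have "\<theta> * \<bar>cc k\<bar> \<le> \<theta> * MC" using tpos cMC[OF k] by simp
      also have "\<dots> = (1 - MA) / 2" unfolding thd using MC0 by simp
      finally have h: "\<theta> * \<bar>cc k\<bar> \<le> (1 - MA) / 2" .
      show ?thesis using h aMA[OF k] MA1 by (simp add: field_simps)
    qed
    then show ?thesis using tpos by auto
  qed
  have tpos: "0 < \<theta>" using th by auto
  have s01: "0 \<le> s k \<and> s k < 1" if "k \<in> {1..n}" for k
    using th d01[OF that] that unfolding s_def aa_def cc_def by auto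
  define \<rho> where "\<rho> p q = \<bar>fst p - fst q\<bar> + \<theta> * \<bar>snd p - snd q\<bar>" for p q :: "real \<times> real"
  define P where "P k = (u k, v k)" for k
  have tri: "\<rho> p r \<le> \<rho> p q + \<rho> q r" for p q r
  proof -
    have "\<bar>snd p - snd r\<bar> \<le> \<bar>snd p - snd q\<bar> + \<bar>snd q - snd r\<bar>" by linarith
    then have "\<theta> * \<bar>snd p - snd r\<bar> \<le> \<theta> * (\<bar>snd p - snd q\<bar> + \<bar>snd q - snd r\<bar>)"
      using tpos by (intro mult_left_mono) auto
    then show ?thesis unfolding \<rho>_def by (simp add: algebra_simps)
  qed
  have rnn: "0 \<le> \<rho> p q" for p q unfolding \<rho>_def using tpos by simp
  have Fapp: "F k (p1, p2) = (aa k * p1 + bb k, cc k * p1 + d k * p2 + ee k)" for k p1 p2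
    unfolding F_def fif_map_def aa_def bb_def cc_def ee_def by simp
  have contr: "\<rho> (F k p) (F k q) \<le> s k * \<rho> p q" if k: "k \<in> {1..n}" for k p q
  proof -
    obtain p1 p2 where p: "p = (p1, p2)" by fastforce
    obtain q1 q2 where q: "q = (q1, q2)" by fastforce
    have ak: "0 \<le> aa k" using a01[OF k] by auto
    have dk: "0 \<le> d k" using d01[OF k] by auto
    have e1: "\<bar>aa k * p1 + bb k - (aa k * q1 + bb k)\<bar> = aa k * \<bar>p1 - q1\<bar>"
    proof -
      have "aa k * p1 + bb k - (aa k * q1 + bb k) = aa k * (p1 - q1)" by (simp add: algebra_simps)
      then show ?thesis using ak by (simp add: abs_mult)
    qed
    have e2: "\<bar>cc k * p1 + d k * p2 + ee k - (cc k * q1 + d k * q2 + ee k)\<bar>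
       \<le> \<bar>cc k\<bar> * \<bar>p1 - q1\<bar> + d k * \<bar>p2 - q2\<bar>"
    proof -
      have "cc k * p1 + d k * p2 + ee k - (cc k * q1 + d k * q2 + ee k)
          = cc k * (p1 - q1) + d k * (p2 - q2)" by (simp add: algebra_simps)
      moreover have "\<bar>cc k * (p1 - q1) + d k * (p2 - q2)\<bar> \<le> \<bar>cc k * (p1 - q1)\<bar> + \<bar>d k * (p2 - q2)\<bar>"
        by (rule abs_triangle_ineq)
      ultimately show ?thesis using dk by (simp add: abs_mult)
    qed
    have "\<rho> (F k p) (F k q) \<le> aa k * \<bar>p1 - q1\<bar> + \<theta> * (\<bar>cc k\<bar> * \<bar>p1 - q1\<bar> + d k * \<bar>p2 - q2\<bar>)"
      unfolding \<rho>_def p q Fapp using e1 e2 tpos by (simp add: mult_left_mono)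
    also have "\<dots> = (aa k + \<theta> * \<bar>cc k\<bar>) * \<bar>p1 - q1\<bar> + d k * (\<theta> * \<bar>p2 - q2\<bar>)"
      by (simp add: algebra_simps)
    also have "\<dots> \<le> s k * \<bar>p1 - q1\<bar> + s k * (\<theta> * \<bar>p2 - q2\<bar>)"
      unfolding s_def aa_def cc_def using tpos
      by (intro add_mono mult_right_mono) auto
    also have "\<dots> = s k * \<rho> p q" unfolding \<rho>_def p q by (simp add: algebra_simps)
    finally show ?thesis .
  qed
  have fixp: "F k (P k) = P k" if k: "k \<in> {1..n}" for k
  proof -
    have a1: "1 - aa k \<noteq> 0" using a01[OF k] by auto
    have d1: "1 - d k \<noteq> 0" using d01[OF k] by auto
    have "aa k * u k + bb k = u k" unfolding u_def aa_def[symmetric] bb_def[symmetric]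
      using a1 by (simp add: field_simps)
    moreover have "cc k * u k + d k * v k + ee k = v k"
    proof -
      have vk: "v k = (cc k * u k + ee k) / (1 - d k)"
        unfolding u_def v_def aa_def[symmetric] bb_def[symmetric] cc_def[symmetric] ee_def[symmetric]
        by (rule vhelp)
      have "(1 - d k) * v k = cc k * u k + ee k" using vk d1 by simp
      then have "v k - d k * v k = cc k * u k + ee k" by (simp add: algebra_simps)
      then show ?thesis by linarith
    qed
    ultimately show ?thesis unfolding P_def Fapp by simp
  qed
  have Mb: "\<rho> (P j) (P i) \<le> M" if "i \<in> {1..n}" "j \<in> {1..n}" for i j
  proof -
    have "\<rho> (P j) (P i) = (\<lambda>(i, j). \<bar>u i - u j\<bar> + \<theta> * \<bar>v i - v j\<bar>) (j, i)"
      unfolding \<rho>_def P_def by simp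
    also have "\<dots> \<le> M" unfolding M_def using that by (intro Max_ge) auto
    finally show ?thesis .
  qed
  have bdd: "bdd_above ((\<lambda>q. \<rho> q (P k)) ` K)" for k
  proof -
    obtain Bd where Bd: "\<forall>q\<in>K. norm q \<le> Bd"
      using compact_imp_bounded[OF K(2)] unfolding bounded_iff by blast
    have "\<rho> q (P k) \<le> (Bd + \<bar>fst (P k)\<bar>) + \<theta> * (Bd + \<bar>snd (P k)\<bar>)" if q: "q \<in> K" for q
    proof -
      obtain q1 q2 where qq: "q = (q1, q2)" by fastforce
      have "\<bar>q1\<bar> \<le> Bd" using Bd q qq norm_fst_le[of q1 q2] by auto
      moreover have "\<bar>q2\<bar> \<le> Bd" using Bd q qq norm_snd_le[of q2 q1] by auto
      ultimately have "\<bar>q1 - fst (P k)\<bar> \<le> Bd + \<bar>fst (P k)\<bar>" "\<bar>q2 - snd (P k)\<bar> \<le> Bd + \<bar>snd (P k)\<bar>"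
        by linarith+
      then show ?thesis unfolding \<rho>_def qq using tpos
        by (simp add: add_mono mult_left_mono)
    qed
    then show ?thesis by (intro bdd_aboveI2) auto
  qed
  have sorted': "s (\<sigma> i) \<le> s (\<sigma> j)" if "1 \<le> i" "i \<le> j" "j \<le> n" for i j
    using sorted[OF that] unfolding s_def \<theta>_def .
  have AB: "\<rho> q (P k) \<le>
     (if k = \<sigma> n then M * (1 + s (\<sigma> (n - 1))) / (1 - s (\<sigma> (n - 1)) * s (\<sigma> n))
      else M * (1 + s (\<sigma> n)) / (1 - s (\<sigma> (n - 1)) * s (\<sigma> n)))"
    if "k \<in> {1..n}" "q \<in> K" for k q
    apply (rule abstract_bound[where K=K and F=F and P=P and \<rho>=\<rho> and s=s and \<sigma>=\<sigma> and M=M and n=n])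
    subgoal by (rule K(1))
    subgoal by (rule K(3))
    subgoal by (rule n2)
    subgoal by (rule perm)
    subgoal by (rule sorted')
    subgoal by (rule s01)
    subgoal by (rule tri)
    subgoal by (rule rnn)
    subgoal by (rule contr)
    subgoal by (rule fixp)
    subgoal by (rule Mb)
    subgoal by (rule bdd)
    subgoal by (rule that(1))
    subgoal by (rule that(2))
    done
  have main: "K \<subseteq> {x 0..x n} \<times> {A..B}"
  proof
    fix p assume pK: "p \<in> K"
    then obtain t where t: "t \<in> {x 0..x n}" "p = (t, f t)" unfolding K_def by auto
    obtain k q where k: "k \<in> {1..n}" and q: "q \<in> K" and pe: "p = F k q"
      using pK K(3) by blast
    have "\<theta> * \<bar>f t - v k\<bar> \<le> \<rho> p (P k)" unfolding \<rho>_def t P_def by simp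
    also have "\<dots> = \<rho> (F k q) (F k (P k))" using pe fixp[OF k] by simp
    also have "\<dots> \<le> s k * \<rho> q (P k)" by (rule contr[OF k])
    finally have h1: "\<theta> * \<bar>f t - v k\<bar> \<le> s k * \<rho> q (P k)" .
    have "k \<in> \<sigma> ` {1..n}" using permutes_image[OF perm] k by simp
    then obtain j where j: "j \<in> {1..n}" "k = \<sigma> j" by auto
    have sk: "0 \<le> s k" using s01[OF k] by auto
    define W where "W = (if k = \<sigma> n then M * (1 + s (\<sigma> (n - 1))) / D else M * (1 + s (\<sigma> n)) / D)"
    have "\<rho> q (P k) \<le> W" unfolding W_def D_def using AB[OF k q] .
    then have "\<theta> * \<bar>f t - v k\<bar> \<le> s k * W" using h1 sk by (meson mult_left_mono order_trans)
    then have fb: "\<bar>f t - v k\<bar> \<le> s k * W / \<theta>" using tpos by (simp add: field_simps)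
    have "A \<le> f t \<and> f t \<le> B"
    proof (cases "j = n")
      case True
      then have kn: "k = \<sigma> n" using j by simp
      have "s k * W / \<theta> = M * s (\<sigma> n) * (1 + s (\<sigma> (n - 1))) / (\<theta> * D)"
        unfolding W_def using kn by (simp add: ac_simps)
      then show ?thesis using fb kn unfolding A_def B_def by auto
    next
      case False
      then have jn: "j \<in> {1..n - 1}" using j by auto
      have "k \<noteq> \<sigma> n" using j False permutes_inj[OF perm] unfolding inj_def by auto
      then have "s k * W / \<theta> = M * s (\<sigma> j) * (1 + s (\<sigma> n)) / (\<theta> * D)"
        unfolding W_def using j by (simp add: ac_simps)
      moreover have "Min ((\<lambda>j. v (\<sigma> j) - M * s (\<sigma> j) * (1 + s (\<sigma> n)) / (\<theta> * D)) ` {1..n - 1})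
          \<le> v (\<sigma> j) - M * s (\<sigma> j) * (1 + s (\<sigma> n)) / (\<theta> * D)"
        using jn by (intro Min_le) auto
      moreover have "Max ((\<lambda>j. v (\<sigma> j) + M * s (\<sigma> j) * (1 + s (\<sigma> n)) / (\<theta> * D)) ` {1..n - 1})
          \<ge> v (\<sigma> j) + M * s (\<sigma> j) * (1 + s (\<sigma> n)) / (\<theta> * D)"
        using jn by (intro Max_ge) auto
      ultimately show ?thesis using fb j unfolding A_def B_def by auto
    qed
    then show "p \<in> {x 0..x n} \<times> {A..B}" using t by auto
  qed
  show ?thesis unfolding Let_def using main
    unfolding K_def A_def B_def D_def M_def s_def v_def u_def \<theta>_def .
qed

end
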